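(* For $\alpha>1$ let $X_\alpha$ be a Pareto random variable with $\mathbb P(X_\alpha>x)=(x/x_{\min})^{-\alpha}$ for $x\ge x_{\min}$, where $x_{\min}=x_{\min}(\alpha)>0$ (e.g. $x_{\min}=(\alpha-1)/\alpha$, so that $\mathbb E[X_\alpha]=1$). Then for every $q\in(0,1)$: (i) $\kappa_q(X_\alpha)=q^{\frac{\alpha-1}{\alpha}}$, independently of $x_{\min}$; (ii) the map $\alpha\mapsto \kappa_q(X_\alpha)$ is strictly convex on $(1,\infty)$; (iii) consequently, if $\alpha_1,\dots,\alpha_m>1$, $\omega_1,\dots,\omega_m>0$ with $\sum_i\omega_i=1$, $\bar\alpha=\sum_{i=1}^m\omega_i\alpha_i$, the $X_{\alpha_i}$ are normalized so that $\mathbb E[X_{\alpha_i}]=1$ for all $i$, and $X$ has the mixture distribution $\sum_{i=1}^m\omega_i\,\mathrm{Law}(X_{\alpha_i})$, then $$\kappa_q(X)\ \ge\ \sum_{i=1}^m\omega_i\,\kappa_q(X_{\alpha_i})\ \ge\ \kappa_q(X_{\bar\alpha}).$$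
   Context: For a positive random variable $Y$ with continuous distribution and finite mean, and $q\in(0,1)$, the exceedance threshold is $h_Y(q)=\inf\{h\ge 0:\ \mathbb P(Y>h)\le q\}$ and the (theoretical) quantile contribution is $$\kappa_q(Y)=q\,\frac{\mathbb E[Y\mid Y>h_Y(q)]}{\mathbb E[Y]}=\frac{\mathbb E[Y\mathbf 1_{Y>h_Y(q)}]}{\mathbb E[Y]}.$$ *)

theory Defs
  imports "HOL-Probability.Probability"
begin

definition exc_threshold :: "'a measure \<Rightarrow> ('a \<Rightarrow> real) \<Rightarrow> real \<Rightarrow> real" where
  "exc_threshold M Y q = Inf {h. 0 \<le> h \<and> measure M {w \<in> space M. Y w > h} \<le> q}"

definition qcontrib :: "'a measure \<Rightarrow> ('a \<Rightarrow> real) \<Rightarrow> real \<Rightarrow> real" where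
  "qcontrib M Y q =
     (\<integral>w. Y w * indicator {exc_threshold M Y q<..} (Y w) \<partial>M) / (\<integral>w. Y w \<partial>M)"

definition is_pareto :: "'a measure \<Rightarrow> ('a \<Rightarrow> real) \<Rightarrow> real \<Rightarrow> real \<Rightarrow> bool" where
  "is_pareto M X \<alpha> xm \<longleftrightarrow> prob_space M \<and> X \<in> borel_measurable M \<and> xm > 0 \<and>
     (\<forall>x\<ge>xm. measure M {w \<in> space M. X w > x} = (x / xm) powr (-\<alpha>))"

definition strict_convex_on :: "real set \<Rightarrow> (real \<Rightarrow> real) \<Rightarrow> bool" where
  "strict_convex_on S f \<longleftrightarrow> (\<forall>x\<in>S. \<forall>y\<in>S. \<forall>t::real. x \<noteq> y \<and> 0 < t \<and> t < 1 \<longrightarrow>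
      f ((1 - t) * x + t * y) < (1 - t) * f x + t * f y)"

end

theory Submission
  imports Defs
begin


lemma layer_cake:
  fixes f :: "'a \<Rightarrow> real"
  assumes M: "sigma_finite_measure M" and f: "f \<in> borel_measurable M" and nn: "\<And>w. 0 \<le> f w"
  shows "(\<integral>\<^sup>+w. ennreal (f w) \<partial>M) =
         (\<integral>\<^sup>+t. indicator {0..} t * emeasure M {w\<in>space M. t < f w} \<partial>lborel)"
proof -
  interpret pair_sigma_finite M lborel
    using M by (intro pair_sigma_finite.intro) (auto simp: lborel.sigma_finite_measure_axioms)
  have "(\<integral>\<^sup>+w. ennreal (f w) \<partial>M) =
        (\<integral>\<^sup>+w. (\<integral>\<^sup>+t. indicator {w\<in>space M. t < f w} w * indicator {0..} t \<partial>lborel) \<partial>M)"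
  proof (rule nn_integral_cong)
    fix w assume w: "w \<in> space M"
    have "(\<integral>\<^sup>+t. indicator {w\<in>space M. t < f w} w * indicator {0..} t \<partial>lborel)
         = (\<integral>\<^sup>+t. indicator {0..<f w} t \<partial>lborel)"
      using w by (intro nn_integral_cong) (auto simp: indicator_def)
    also have "\<dots> = ennreal (f w)" using nn[of w] by simp
    finally show "ennreal (f w) = (\<integral>\<^sup>+t. indicator {w\<in>space M. t < f w} w * indicator {0..} t \<partial>lborel)" by simp
  qed
  also have "\<dots> = (\<integral>\<^sup>+t. (\<integral>\<^sup>+w. indicator {w\<in>space M. t < f w} w * indicator {0..} t \<partial>M) \<partial>lborel)"
    by (rule Fubini'[symmetric]) (use f in measurable)
  also have "\<dots> = (\<integral>\<^sup>+t. indicator {0..} t * emeasure M {w\<in>space M. t < f w} \<partial>lborel)"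
  proof (rule nn_integral_cong)
    fix t :: real
    have St: "{w\<in>space M. t < f w} \<in> sets M" using f by measurable
    have "(\<integral>\<^sup>+w. indicator {w\<in>space M. t < f w} w * indicator {0..} t \<partial>M)
      = (\<integral>\<^sup>+w. indicator {w\<in>space M. t < f w} w \<partial>M) * indicator {0..} t"
      by (rule nn_integral_multc) (use St in simp)
    also have "\<dots> = indicator {0..} t * emeasure M {w\<in>space M. t < f w}"
      using St by (simp add: mult.commute)
    finally show "(\<integral>\<^sup>+w. indicator {w\<in>space M. t < f w} w * indicator {0..} t \<partial>M) = indicator {0..} t * emeasure M {w\<in>space M. t < f w}" .
  qed
  finally show ?thesis .
qed

lemma layer_cake_trunc:
  fixes Y :: "'a \<Rightarrow> real"
  assumes M: "sigma_finite_measure M" and Y: "Y \<in> borel_measurable M" and h: "0 \<le> h"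
  shows "(\<integral>\<^sup>+w. ennreal (Y w * indicator {h<..} (Y w)) \<partial>M) =
         (\<integral>\<^sup>+t. indicator {0..} t * emeasure M {w\<in>space M. max h t < Y w} \<partial>lborel)"
proof -
  have "(\<integral>\<^sup>+w. ennreal (Y w * indicator {h<..} (Y w)) \<partial>M) =
     (\<integral>\<^sup>+t. indicator {0..} t * emeasure M {w\<in>space M. t < Y w * indicator {h<..} (Y w)} \<partial>lborel)"
    by (rule layer_cake[OF M]) (use Y h in \<open>auto simp: indicator_def\<close>)
  also have "\<dots> = (\<integral>\<^sup>+t. indicator {0..} t * emeasure M {w\<in>space M. max h t < Y w} \<partial>lborel)"
  proof (rule nn_integral_cong)
    fix t :: real
    show "indicator {0..} t * emeasure M {w\<in>space M. t < Y w * indicator {h<..} (Y w)} =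
          indicator {0..} t * emeasure M {w\<in>space M. max h t < Y w}"
    proof (cases "0 \<le> t")
      case True
      then have "{w\<in>space M. t < Y w * indicator {h<..} (Y w)} = {w\<in>space M. max h t < Y w}"
        using h by (auto simp: indicator_def)
      then show ?thesis by simp
    qed simp
  qed
  finally show ?thesis .
qed

lemma pareto_tail:
  assumes P: "is_pareto M X a xm" and x: "xm \<le> x"
  shows "emeasure M {w\<in>space M. x < X w} = ennreal ((x / xm) powr (-a))"
proof -
  interpret prob_space M using P by (simp add: is_pareto_def)
  have X: "X \<in> borel_measurable M" using P by (simp add: is_pareto_def)
  have "{w\<in>space M. x < X w} \<in> sets M" using X by measurable
  then show ?thesis using P x unfolding is_pareto_def by (simp add: emeasure_eq_measure)
qed

lemma pareto_trunc:
  assumes P: "is_pareto M X a xm" and a: "a > 1" and h: "xm \<le> h"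
  shows "(\<integral>\<^sup>+w. ennreal (X w * indicator {h<..} (X w)) \<partial>M) =
         ennreal (a / (a - 1) * xm powr a * h powr (1 - a))"
proof -
  interpret prob_space M using P by (simp add: is_pareto_def)
  have xm: "xm > 0" and X: "X \<in> borel_measurable M" using P by (auto simp: is_pareto_def)
  have h0: "0 < h" using xm h by simp
  have "(\<integral>\<^sup>+w. ennreal (X w * indicator {h<..} (X w)) \<partial>M) =
         (\<integral>\<^sup>+t. indicator {0..} t * emeasure M {w\<in>space M. max h t < X w} \<partial>lborel)"
    by (rule layer_cake_trunc) (use X h0 prob_space_axioms in \<open>auto intro: prob_space_imp_sigma_finite\<close>)
  also have "\<dots> = (\<integral>\<^sup>+t. ennreal ((h / xm) powr (-a)) * indicator {0..<h} t
                    + ennreal (indicator {h..} t * (xm powr a * t powr (-a))) \<partial>lborel)"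
  proof (rule nn_integral_cong)
    fix t :: real
    show "indicator {0..} t * emeasure M {w\<in>space M. max h t < X w} =
          ennreal ((h / xm) powr (-a)) * indicator {0..<h} t
                    + ennreal (indicator {h..} t * (xm powr a * t powr (-a)))"
    proof (cases "t < h")
      case True
      then show ?thesis using pareto_tail[OF P, of "max h t"] h
        by (auto simp: indicator_def max_def)
    next
      case False
      then have "(t / xm) powr (-a) = xm powr a * t powr (-a)"
        using xm h0 by (simp add: powr_divide powr_minus field_simps)
      then show ?thesis using pareto_tail[OF P, of "max h t"] h False h0
        by (auto simp: indicator_def max_def)
    qed
  qed
  also have "\<dots> = ennreal ((h / xm) powr (-a)) * ennreal h
                 + (\<integral>\<^sup>+t. ennreal (indicator {h..} t * (xm powr a * t powr (-a))) \<partial>lborel)"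
    using h0 by (subst nn_integral_add) (auto simp: nn_integral_cmult)
  also have "(\<integral>\<^sup>+t. ennreal (indicator {h..} t * (xm powr a * t powr (-a))) \<partial>lborel)
     = ennreal (xm powr a * (- (h powr (-a + 1)) / (-a + 1)))"
  proof (rule nn_integral_has_integral_lborel)
    show "(\<lambda>t. indicator {h..} t * (xm powr a * t powr (-a))) \<in> borel_measurable borel"
      by measurable
    show "0 \<le> indicator {h..} t * (xm powr a * t powr (-a))" for t
      by (simp add: indicator_def)
    have "((\<lambda>t. xm powr a * t powr (-a)) has_integral xm powr a * (- (h powr (-a + 1)) / (-a + 1))) {h..}"
      by (intro has_integral_mult_right has_integral_powr_to_inf) (use a h0 in auto)
    then show "((\<lambda>t. indicator {h..} t * (xm powr a * t powr (-a))) has_integral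
               xm powr a * (- (h powr (-a + 1)) / (-a + 1))) UNIV"
    proof -
      have eq: "(\<lambda>t. indicator {h..} t * (xm powr a * t powr (-a))) = (\<lambda>t. if t \<in> {h..} then xm powr a * t powr (-a) else 0)"
        by (auto simp: indicator_def fun_eq_iff)
      show ?thesis unfolding eq has_integral_restrict_UNIV by fact
    qed
  qed
  also have "ennreal ((h / xm) powr (-a)) * ennreal h + ennreal (xm powr a * (- (h powr (-a + 1)) / (-a + 1)))
     = ennreal (a / (a - 1) * xm powr a * h powr (1 - a))"
  proof -
    have e1: "(h / xm) powr (-a) * h = xm powr a * h powr (1 - a)"
      using xm h0 by (simp add: powr_divide powr_minus powr_diff field_simps)
    have e2: "xm powr a * (- (h powr (-a + 1)) / (-a + 1)) = xm powr a * h powr (1 - a) / (a - 1)"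
      using a by (simp add: field_simps)
    have p: "0 \<le> xm powr a * h powr (1 - a)" by simp
    define c where "c = xm powr a * h powr (1 - a)"
    have c: "0 \<le> c" using p c_def by simp
    have "ennreal ((h / xm) powr (-a)) * ennreal h = ennreal c"
      using h0 by (simp add: ennreal_mult'[symmetric] e1 c_def)
    moreover have "ennreal c + ennreal (c / (a - 1)) = ennreal (c + c / (a - 1))"
      using c a by (intro ennreal_plus[symmetric]) auto
    moreover have "c + c / (a - 1) = a / (a - 1) * c" using a by (simp add: field_simps)
    ultimately show ?thesis unfolding e2 c_def[symmetric] by (simp add: c_def mult.assoc)
  qed
  finally show ?thesis .
qed

lemma pareto_trunc_int:
  assumes P: "is_pareto M X a xm" and a: "a > 1" and h: "xm \<le> h"
  shows "(\<integral>w. X w * indicator {h<..} (X w) \<partial>M) = a / (a - 1) * xm powr a * h powr (1 - a)"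
proof -
  have xm: "xm > 0" and X: "X \<in> borel_measurable M" using P by (auto simp: is_pareto_def)
  have nn: "0 \<le> X w * indicator {h<..} (X w)" for w using xm h by (auto simp: indicator_def)
  have "(\<integral>w. X w * indicator {h<..} (X w) \<partial>M) = enn2real (\<integral>\<^sup>+w. ennreal (X w * indicator {h<..} (X w)) \<partial>M)"
    by (rule integral_eq_nn_integral) (use X nn in auto)
  also have "\<dots> = a / (a - 1) * xm powr a * h powr (1 - a)"
    using a by (simp add: pareto_trunc[OF P a h])
  finally show ?thesis .
qed

lemma pareto_AE:
  assumes P: "is_pareto M X a xm"
  shows "AE w in M. xm < X w"
proof -
  interpret prob_space M using P by (simp add: is_pareto_def)
  have "prob {w\<in>space M. xm < X w} = 1" using P by (auto simp: is_pareto_def)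
  from AE_prob_1[OF this] show ?thesis by auto
qed

lemma pareto_mean:
  assumes P: "is_pareto M X a xm" and a: "a > 1"
  shows "(\<integral>w. X w \<partial>M) = a * xm / (a - 1)"
proof -
  have xm: "xm > 0" using P by (auto simp: is_pareto_def)
  have "(\<integral>w. X w \<partial>M) = (\<integral>w. X w * indicator {xm<..} (X w) \<partial>M)"
    by (rule integral_cong_AE) (use P pareto_AE[OF P] in \<open>auto simp: is_pareto_def\<close>)
  also have "\<dots> = a / (a - 1) * xm powr a * xm powr (1 - a)"
    by (rule pareto_trunc_int[OF P a]) simp
  also have "\<dots> = a * xm / (a - 1)"
    using xm by (simp add: powr_add[symmetric])
  finally show ?thesis .
qed

lemma pareto_threshold:
  assumes P: "is_pareto M X a xm" and a: "a > 1" and q: "0 < q" "q < 1"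
  shows "exc_threshold M X q = xm * q powr (-1/a)"
    and "measure M {w\<in>space M. xm * q powr (-1/a) < X w} = q"
proof -
  interpret prob_space M using P by (simp add: is_pareto_def)
  have xm: "xm > 0" and X: "X \<in> borel_measurable M" using P by (auto simp: is_pareto_def)
  define h0 where "h0 = xm * q powr (-1/a)"
  have qa: "1 \<le> q powr (-1/a)" using q a
  proof -
    have "ln q < 0" using q by simp
    then have "0 \<le> -1/a * ln q" using a by (simp add: divide_nonpos_pos)
    then show ?thesis using q by (simp add: powr_def)
  qed
  have h0xm: "xm \<le> h0" using xm qa unfolding h0_def by simp
  have key: "(h / xm) powr (-a) \<le> q \<longleftrightarrow> h0 \<le> h" if h: "xm \<le> h" for h
  proof -
    have hp: "h / xm > 0" using h xm by simp
    have e: "(h / xm) powr (-a) = exp (-a * ln (h/xm))" using h xm by (simp add: powr_def)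
    have e2: "q = exp (ln q)" using q by simp
    have "(h / xm) powr (-a) \<le> q \<longleftrightarrow> exp (-a * ln (h/xm)) \<le> exp (ln q)"
      using e e2 by simp
    also have "\<dots> \<longleftrightarrow> - a * ln (h / xm) \<le> ln q" by simp
    also have "\<dots> \<longleftrightarrow> -(1/a) * ln q \<le> ln (h / xm)" using a by (simp add: field_simps) arith
    also have "\<dots> \<longleftrightarrow> ln (q powr (-1/a)) \<le> ln (h / xm)" using q by (simp add: ln_powr)
    also have "\<dots> \<longleftrightarrow> q powr (-1/a) \<le> h / xm" by (rule ln_le_cancel_iff) (use hp q in auto)
    also have "\<dots> \<longleftrightarrow> h0 \<le> h" using xm unfolding h0_def by (simp add: field_simps)
    finally show ?thesis .
  qed
  have tail: "measure M {w\<in>space M. h < X w} = (h / xm) powr (-a)" if "xm \<le> h" for h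
    using P that by (auto simp: is_pareto_def)
  have "{h. 0 \<le> h \<and> measure M {w \<in> space M. X w > h} \<le> q} = {h0..}"
  proof safe
    fix h assume h: "0 \<le> h" "measure M {w \<in> space M. X w > h} \<le> q"
    show "h0 \<le> h"
    proof (cases "xm \<le> h")
      case True then show ?thesis using key tail h by auto
    next
      case False
      have "measure M {w \<in> space M. X w > xm} \<le> measure M {w \<in> space M. X w > h}"
        using False X by (intro finite_measure_mono) auto
      moreover have "measure M {w \<in> space M. X w > xm} = 1" using tail[of xm] xm by simp
      ultimately show ?thesis using h q by simp
    qed
  next
    fix h assume "h0 \<le> h"
    then show "0 \<le> h" using h0xm xm by simp
    show "measure M {w \<in> space M. X w > h} \<le> q" using key tail h0xm \<open>h0 \<le> h\<close> by auto
  qed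
  then show "exc_threshold M X q = xm * q powr (-1/a)"
    unfolding exc_threshold_def h0_def[symmetric] by simp
  have "(h0 / xm) powr (-a) = q"
    using xm q a unfolding h0_def by (simp add: powr_powr)
  then show "measure M {w\<in>space M. xm * q powr (-1/a) < X w} = q"
    using tail[OF h0xm] unfolding h0_def by simp
qed

lemma pareto_qcontrib:
  assumes P: "is_pareto M X a xm" and a: "a > 1" and q: "0 < q" "q < 1"
  shows "qcontrib M X q = q powr ((a - 1) / a)"
proof -
  have xm: "xm > 0" using P by (auto simp: is_pareto_def)
  define h0 where "h0 = xm * q powr (-1/a)"
  have qa: "1 \<le> q powr (-1/a)" using q a
  proof -
    have "ln q < 0" using q by simp
    then have "0 \<le> -1/a * ln q" using a by (simp add: divide_nonpos_pos)
    then show ?thesis using q by (simp add: powr_def)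
  qed
  have h0xm: "xm \<le> h0" using xm qa unfolding h0_def by simp
  have "qcontrib M X q = (a / (a - 1) * xm powr a * h0 powr (1 - a)) / (a * xm / (a - 1))"
    unfolding qcontrib_def pareto_threshold(1)[OF P a q] h0_def[symmetric]
      pareto_trunc_int[OF P a h0xm] pareto_mean[OF P a] ..
  also have "\<dots> = xm powr (a - 1) * h0 powr (1 - a)"
  proof -
    have g: "a / (a - 1) * A * B / (a * xm / (a - 1)) = A / xm * B" for A B
      using a xm by (simp add: field_simps)
    have "xm powr (a - 1) = xm powr a / xm" using xm by (simp add: powr_diff)
    then show ?thesis using g by simp
  qed
  also have "\<dots> = (q powr (-1/a)) powr (1 - a)"
  proof -
    have "h0 powr (1 - a) = xm powr (1 - a) * (q powr (-1/a)) powr (1 - a)"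
      unfolding h0_def using xm q by (intro powr_mult; auto)
    moreover have "xm powr (a - 1) * xm powr (1 - a) = 1"
      using xm by (simp add: powr_add[symmetric])
    ultimately show ?thesis by (simp add: mult.assoc[symmetric])
  qed
  also have "\<dots> = q powr (-1/a * (1 - a))" by (simp add: powr_powr)
  also have "-1/a * (1 - a) = (a - 1) / a" using a by (simp add: field_simps)
  finally show ?thesis .
qed


lemma inv_strict_convex:
  fixes x y t :: real
  assumes x: "x > 0" and y: "y > 0" and xy: "x \<noteq> y" and t: "0 < t" "t < 1"
  shows "1 / ((1 - t) * x + t * y) < (1 - t) / x + t / y"
proof -
  define z where "z = (1 - t) * x + t * y"
  have z: "z > 0" using x y t unfolding z_def by (intro add_pos_nonneg) auto
  have sq: "0 < t * (1 - t) * (x - y)^2 / (x * y * z)" using t xy x y z by simp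
  have "(1 - t) / x + t / y - 1 / z = t * (1 - t) * (x - y)^2 / (x * y * z)"
    using x y z unfolding z_def by (simp add: field_simps power2_eq_square)
  then show ?thesis using sq unfolding z_def by linarith
qed
lemma kappa_strict_convex:
  assumes q: "0 < q" "q < 1"
  shows "strict_convex_on {1<..} (\<lambda>a. q powr ((a - 1) / a))"
  unfolding strict_convex_on_def
proof (intro ballI allI impI)
  fix x y t :: real assume xS: "x \<in> {1<..}" and yS: "y \<in> {1<..}" and c: "x \<noteq> y \<and> 0 < t \<and> t < 1"
  have x: "x > 0" and y: "y > 0" using xS yS by auto
  define L where "L = - ln q"
  have L: "L > 0" using q unfolding L_def by simp
  define \<phi> where "\<phi> = (\<lambda>a::real. ln q + L / a)"
  have fe: "q powr ((a - 1) / a) = exp (\<phi> a)" if "a > 0" for a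
  proof -
    have "(a - 1) / a * ln q = ln q + L / a" unfolding L_def using that by (simp add: field_simps)
    then show ?thesis using q unfolding \<phi>_def powr_def by simp
  qed
  define z where "z = (1 - t) * x + t * y"
  have z: "z > 0" using x y c unfolding z_def by (intro add_pos_nonneg) auto
  have "1 / z < (1 - t) / x + t / y" unfolding z_def using inv_strict_convex x y c by blast
  then have "L * (1 / z) < L * ((1 - t) / x + t / y)" using L by (rule mult_strict_left_mono)
  moreover have "L * ((1 - t) / x + t / y) = (1 - t) * (L / x) + t * (L / y)" by (simp add: field_simps)
  ultimately have "L / z < (1 - t) * (L / x) + t * (L / y)" by simp
  then have "\<phi> z < (1 - t) * \<phi> x + t * \<phi> y"
    unfolding \<phi>_def by (simp add: distrib_left left_diff_distrib)
  then have "exp (\<phi> z) < exp ((1 - t) * \<phi> x + t * \<phi> y)" by simp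
  also have "\<dots> \<le> (1 - t) * exp (\<phi> x) + t * exp (\<phi> y)"
    using convex_onD[OF exp_convex, of t "\<phi> x" "\<phi> y"] c by simp
  finally show "q powr (((1 - t) * x + t * y - 1) / ((1 - t) * x + t * y))
      < (1 - t) * q powr ((x - 1) / x) + t * q powr ((y - 1) / y)"
    using fe[OF x] fe[OF y] fe[OF z] unfolding z_def by simp
qed



lemma meas_tail_borel:
  assumes "finite_measure N" and Y: "Y \<in> borel_measurable N"
  shows "(\<lambda>t::real. measure N {w\<in>space N. max h t < Y w}) \<in> borel_measurable borel"
proof -
  interpret finite_measure N by fact
  have "mono (\<lambda>t::real. - measure N {w\<in>space N. max h t < Y w})"
  proof (rule monoI)
    fix s t :: real assume "s \<le> t"
    then have "measure N {w\<in>space N. max h t < Y w} \<le> measure N {w\<in>space N. max h s < Y w}"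
      using Y by (intro finite_measure_mono) auto
    then show "- measure N {w\<in>space N. max h s < Y w} \<le> - measure N {w\<in>space N. max h t < Y w}" by simp
  qed
  from borel_measurable_uminus[OF borel_measurable_mono[OF this]] show ?thesis by simp
qed

lemma mixture_nn:
  fixes X :: "'b \<Rightarrow> real" and Xs :: "nat \<Rightarrow> 'a \<Rightarrow> real"
  assumes M: "prob_space M" and X: "X \<in> borel_measurable M" and I: "finite I"
    and Ms: "\<And>i. i \<in> I \<Longrightarrow> prob_space (Ms i)"
    and Xs: "\<And>i. i \<in> I \<Longrightarrow> Xs i \<in> borel_measurable (Ms i)"
    and \<omega>: "\<And>i. i \<in> I \<Longrightarrow> 0 \<le> \<omega> i"
    and mix: "\<forall>A \<in> sets borel. measure M (X -` A \<inter> space M) =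
            (\<Sum>i\<in>I. \<omega> i * measure (Ms i) (Xs i -` A \<inter> space (Ms i)))"
    and h: "0 \<le> h"
  shows "(\<integral>\<^sup>+w. ennreal (X w * indicator {h<..} (X w)) \<partial>M) =
     (\<Sum>i\<in>I. ennreal (\<omega> i) * (\<integral>\<^sup>+w. ennreal (Xs i w * indicator {h<..} (Xs i w)) \<partial>Ms i))"
proof -
  have mset: "{w\<in>space N. c < Y w} = Y -` {c<..} \<inter> space N" for N and Y :: "'c \<Rightarrow> real" and c
    by auto
  have em: "emeasure M {w\<in>space M. c < X w} = (\<Sum>i\<in>I. ennreal (\<omega> i) * ennreal (measure (Ms i) {w\<in>space (Ms i). c < Xs i w}))" for c
  proof -
    interpret prob_space M by fact
    have "emeasure M {w\<in>space M. c < X w} = ennreal (measure M {w\<in>space M. c < X w})"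
      by (simp add: emeasure_eq_measure)
    also have "measure M {w\<in>space M. c < X w} = (\<Sum>i\<in>I. \<omega> i * measure (Ms i) {w\<in>space (Ms i). c < Xs i w})"
      using mix unfolding mset by auto
    also have "ennreal \<dots> = (\<Sum>i\<in>I. ennreal (\<omega> i * measure (Ms i) {w\<in>space (Ms i). c < Xs i w}))"
      using \<omega> by (subst sum_ennreal) auto
    also have "\<dots> = (\<Sum>i\<in>I. ennreal (\<omega> i) * ennreal (measure (Ms i) {w\<in>space (Ms i). c < Xs i w}))"
      using \<omega> by (intro sum.cong refl) (simp add: ennreal_mult)
    finally show ?thesis .
  qed
  have emi: "emeasure (Ms i) {w\<in>space (Ms i). c < Xs i w} = ennreal (measure (Ms i) {w\<in>space (Ms i). c < Xs i w})"
    if "i \<in> I" for i c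
  proof -
    interpret prob_space "Ms i" using Ms that by simp
    show ?thesis by (simp add: emeasure_eq_measure)
  qed
  have "(\<integral>\<^sup>+w. ennreal (X w * indicator {h<..} (X w)) \<partial>M) =
         (\<integral>\<^sup>+t. indicator {0..} t * emeasure M {w\<in>space M. max h t < X w} \<partial>lborel)"
    by (rule layer_cake_trunc) (use X h M in \<open>auto intro: prob_space_imp_sigma_finite\<close>)
  also have "\<dots> = (\<integral>\<^sup>+t. (\<Sum>i\<in>I. ennreal (\<omega> i) * (indicator {0..} t * ennreal (measure (Ms i) {w\<in>space (Ms i). max h t < Xs i w}))) \<partial>lborel)"
    unfolding em by (simp add: sum_distrib_left mult.assoc mult.left_commute)
  also have "\<dots> = (\<Sum>i\<in>I. (\<integral>\<^sup>+t. ennreal (\<omega> i) * (indicator {0..} t * ennreal (measure (Ms i) {w\<in>space (Ms i). max h t < Xs i w})) \<partial>lborel))"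
  proof (rule nn_integral_sum)
    fix i assume i: "i \<in> I"
    have "(\<lambda>t::real. measure (Ms i) {w\<in>space (Ms i). max h t < Xs i w}) \<in> borel_measurable borel"
      by (rule meas_tail_borel) (use Ms[OF i] Xs[OF i] in \<open>auto simp: prob_space_def\<close>)
    then show "(\<lambda>t. ennreal (\<omega> i) * (indicator {0..} t * ennreal (measure (Ms i) {w\<in>space (Ms i). max h t < Xs i w}))) \<in> borel_measurable lborel"
      by measurable
  qed
  also have "\<dots> = (\<Sum>i\<in>I. ennreal (\<omega> i) * (\<integral>\<^sup>+w. ennreal (Xs i w * indicator {h<..} (Xs i w)) \<partial>Ms i))"
  proof (rule sum.cong[OF refl])
    fix i assume i: "i \<in> I"
    have "(\<integral>\<^sup>+w. ennreal (Xs i w * indicator {h<..} (Xs i w)) \<partial>Ms i) =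
         (\<integral>\<^sup>+t. indicator {0..} t * emeasure (Ms i) {w\<in>space (Ms i). max h t < Xs i w} \<partial>lborel)"
      by (rule layer_cake_trunc) (use Xs[OF i] h Ms[OF i] in \<open>auto intro: prob_space_imp_sigma_finite\<close>)
    also have "\<dots> = (\<integral>\<^sup>+t. indicator {0..} t * ennreal (measure (Ms i) {w\<in>space (Ms i). max h t < Xs i w}) \<partial>lborel)"
      by (simp only: emi[OF i])
    finally have e: "(\<integral>\<^sup>+w. ennreal (Xs i w * indicator {h<..} (Xs i w)) \<partial>Ms i) = \<dots>" .
    have mb: "(\<lambda>t::real. measure (Ms i) {w\<in>space (Ms i). max h t < Xs i w}) \<in> borel_measurable borel"
      by (rule meas_tail_borel) (use Ms[OF i] Xs[OF i] in \<open>auto simp: prob_space_def\<close>)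
    show "(\<integral>\<^sup>+t. ennreal (\<omega> i) * (indicator {0..} t * ennreal (measure (Ms i) {w\<in>space (Ms i). max h t < Xs i w})) \<partial>lborel)
       = ennreal (\<omega> i) * (\<integral>\<^sup>+w. ennreal (Xs i w * indicator {h<..} (Xs i w)) \<partial>Ms i)"
      unfolding e by (rule nn_integral_cmult) (use mb in measurable)
  qed
  finally show ?thesis .
qed

lemma integrable_trunc:
  fixes Y :: "'a \<Rightarrow> real"
  assumes "integrable N Y"
  shows "integrable N (\<lambda>w. Y w * indicator {c<..} (Y w))"
proof (rule Bochner_Integration.integrable_bound[OF assms])
  have Y: "Y \<in> borel_measurable N" using assms by simp
  show "(\<lambda>w. Y w * indicator {c<..} (Y w)) \<in> borel_measurable N" using Y by measurable
  show "AE x in N. norm (Y x * indicator {c<..} (Y x)) \<le> norm (Y x)"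
    by (auto simp: indicator_def)
qed

lemma mixture_int:
  fixes X :: "'b \<Rightarrow> real" and Xs :: "nat \<Rightarrow> 'a \<Rightarrow> real"
  assumes M: "prob_space M" and X: "X \<in> borel_measurable M" and I: "finite I"
    and Ms: "\<And>i. i \<in> I \<Longrightarrow> prob_space (Ms i)"
    and Xs: "\<And>i. i \<in> I \<Longrightarrow> integrable (Ms i) (Xs i)"
    and \<omega>: "\<And>i. i \<in> I \<Longrightarrow> 0 \<le> \<omega> i"
    and mix: "\<forall>A \<in> sets borel. measure M (X -` A \<inter> space M) =
            (\<Sum>i\<in>I. \<omega> i * measure (Ms i) (Xs i -` A \<inter> space (Ms i)))"
    and h: "0 \<le> h"
  shows "(\<integral>w. X w * indicator {h<..} (X w) \<partial>M) =
     (\<Sum>i\<in>I. \<omega> i * (\<integral>w. Xs i w * indicator {h<..} (Xs i w) \<partial>Ms i))"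
proof -
  have nn: "0 \<le> Y w * indicator {h<..} (Y w)" for Y :: "'c \<Rightarrow> real" and w
    using h by (auto simp: indicator_def)
  have ip: "0 \<le> (\<integral>w. Xs i w * indicator {h<..} (Xs i w) \<partial>Ms i)" for i
    by (intro integral_nonneg_AE AE_I2 nn)
  have ei: "(\<integral>\<^sup>+w. ennreal (Xs i w * indicator {h<..} (Xs i w)) \<partial>Ms i) =
      ennreal (\<integral>w. Xs i w * indicator {h<..} (Xs i w) \<partial>Ms i)" if i: "i \<in> I" for i
    by (rule nn_integral_eq_integral) (use integrable_trunc[OF Xs[OF i]] nn in \<open>auto intro!: AE_I2 nn\<close>)
  have "(\<integral>\<^sup>+w. ennreal (X w * indicator {h<..} (X w)) \<partial>M) =
     (\<Sum>i\<in>I. ennreal (\<omega> i) * (\<integral>\<^sup>+w. ennreal (Xs i w * indicator {h<..} (Xs i w)) \<partial>Ms i))"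
    by (rule mixture_nn[OF M X I Ms _ \<omega> mix h]) (use Xs in auto)
  also have "\<dots> = (\<Sum>i\<in>I. ennreal (\<omega> i * (\<integral>w. Xs i w * indicator {h<..} (Xs i w) \<partial>Ms i)))"
    using \<omega> by (intro sum.cong refl) (simp add: ei ennreal_mult')
  also have "\<dots> = ennreal (\<Sum>i\<in>I. \<omega> i * (\<integral>w. Xs i w * indicator {h<..} (Xs i w) \<partial>Ms i))"
    using \<omega> nn by (intro sum_ennreal) (auto intro!: mult_nonneg_nonneg ip)
  finally have e: "(\<integral>\<^sup>+w. ennreal (X w * indicator {h<..} (X w)) \<partial>M) = \<dots>" .
  have pos: "0 \<le> (\<Sum>i\<in>I. \<omega> i * (\<integral>w. Xs i w * indicator {h<..} (Xs i w) \<partial>Ms i))"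
    using \<omega> nn by (auto intro!: sum_nonneg mult_nonneg_nonneg ip)
  have "(\<integral>w. X w * indicator {h<..} (X w) \<partial>M) = enn2real (\<integral>\<^sup>+w. ennreal (X w * indicator {h<..} (X w)) \<partial>M)"
    by (rule integral_eq_nn_integral) (use X nn in \<open>auto intro!: AE_I2 nn\<close>)
  then show ?thesis using e pos by simp
qed

lemma comp_ineq:
  fixes Y :: "'a \<Rightarrow> real"
  assumes N: "prob_space N" and Y: "integrable N Y" and h1: "measure N {w\<in>space N. h1 < Y w} = q"
  shows "(\<integral>w. Y w * indicator {h1<..} (Y w) \<partial>N) - h * q \<le>
         (\<integral>w. Y w * indicator {h<..} (Y w) \<partial>N) - h * measure N {w\<in>space N. h < Y w}"
proof -
  interpret prob_space N by fact
  have Ym: "Y \<in> borel_measurable N" using Y by simp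
  have rep: "(\<integral>w. Y w * indicator {c<..} (Y w) \<partial>N) - h * measure N {w\<in>space N. c < Y w}
      = (\<integral>w. (Y w - h) * indicator {c<..} (Y w) \<partial>N)" for c
  proof -
    have S: "{w\<in>space N. c < Y w} \<in> sets N" using Ym by measurable
    have ie: "{w\<in>space N. c < Y w} \<inter> space N = {w\<in>space N. c < Y w}" by auto
    have ii: "integrable N (\<lambda>w. h * indicator {w\<in>space N. c < Y w} w)"
      using S by (intro integrable_mult_right) (simp add: integrable_indicator_iff emeasure_eq_measure)
    have "(\<integral>w. h * indicator {w\<in>space N. c < Y w} w \<partial>N) = h * measure N {w\<in>space N. c < Y w}"
      by (simp add: ie)
    moreover have "(\<integral>w. (Y w - h) * indicator {c<..} (Y w) \<partial>N) =
        (\<integral>w. Y w * indicator {c<..} (Y w) - h * indicator {w\<in>space N. c < Y w} w \<partial>N)"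
      by (rule Bochner_Integration.integral_cong) (auto simp: indicator_def)
    moreover have "\<dots> = (\<integral>w. Y w * indicator {c<..} (Y w) \<partial>N) - (\<integral>w. h * indicator {w\<in>space N. c < Y w} w \<partial>N)"
      by (rule Bochner_Integration.integral_diff[OF integrable_trunc[OF Y] ii])
    ultimately show ?thesis by (simp add: ie)
  qed
  have "(\<integral>w. (Y w - h) * indicator {h1<..} (Y w) \<partial>N) \<le> (\<integral>w. (Y w - h) * indicator {h<..} (Y w) \<partial>N)"
  proof (rule integral_mono)
    have ii: "integrable N (\<lambda>w. (Y w - h) * indicator {c<..} (Y w))" for c
    proof -
      have "integrable N (\<lambda>w. Y w * indicator {c<..} (Y w) - h * indicator {w\<in>space N. c < Y w} w)"
        using Ym by (intro Bochner_Integration.integrable_diff integrable_trunc[OF Y] integrable_mult_right)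
          (simp add: integrable_indicator_iff emeasure_eq_measure)
      then show ?thesis
        by (rule Bochner_Integration.integrable_cong[THEN iffD1, rotated -1]) (auto simp: indicator_def)
    qed
    show "integrable N (\<lambda>w. (Y w - h) * indicator {h1<..} (Y w))" by (rule ii)
    show "integrable N (\<lambda>w. (Y w - h) * indicator {h<..} (Y w))" by (rule ii)
    show "(Y w - h) * indicator {h1<..} (Y w) \<le> (Y w - h) * indicator {h<..} (Y w)" for w
      by (auto simp: indicator_def)
  qed
  then show ?thesis using rep[of h1] rep[of h] h1 by simp
qed



lemma powr_ge1_neg:
  fixes x e :: real
  assumes "0 < x" "x \<le> 1" "e \<le> 0" shows "1 \<le> x powr e"
proof -
  have "ln x \<le> 0" using assms by simp
  then have "0 \<le> e * ln x" using assms by (simp add: mult_nonpos_nonpos)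
  then show ?thesis using assms by (simp add: powr_def)
qed

lemma powr_le1_neg:
  fixes x e :: real
  assumes "1 \<le> x" "e \<le> 0" shows "x powr e \<le> 1"
proof -
  have "0 \<le> ln x" using assms by simp
  then have "e * ln x \<le> 0" using assms by (simp add: mult_nonpos_nonneg)
  then show ?thesis using assms by (simp add: powr_def)
qed

lemma pareto_tail_min:
  assumes P: "is_pareto M X a xm" and a: "a > 0" and t: "0 < t"
  shows "measure M {w\<in>space M. t < X w} = min 1 ((t / xm) powr (-a))"
proof -
  interpret prob_space M using P by (simp add: is_pareto_def)
  have xm: "xm > 0" and X: "X \<in> borel_measurable M" using P by (auto simp: is_pareto_def)
  have tail: "measure M {w\<in>space M. c < X w} = (c / xm) powr (-a)" if "xm \<le> c" for c
    using P that by (auto simp: is_pareto_def)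
  show ?thesis
  proof (cases "xm \<le> t")
    case True
    then have "(t / xm) powr (-a) \<le> 1" using xm a by (intro powr_le1_neg) auto
    then show ?thesis using tail[OF True] by simp
  next
    case False
    have "measure M {w\<in>space M. xm < X w} \<le> measure M {w\<in>space M. t < X w}"
      using False X by (intro finite_measure_mono) auto
    then have "measure M {w\<in>space M. t < X w} = 1" using tail[of xm] xm prob_le_1[of "{w\<in>space M. t < X w}"]
      by simp
    moreover have "1 \<le> (t / xm) powr (-a)" using xm a t False by (intro powr_ge1_neg) auto
    ultimately show ?thesis by simp
  qed
qed

lemma pareto_tail0:
  assumes P: "is_pareto M X a xm"
  shows "measure M {w\<in>space M. 0 < X w} = 1"
proof -
  interpret prob_space M using P by (simp add: is_pareto_def)
  have xm: "xm > 0" and X: "X \<in> borel_measurable M" using P by (auto simp: is_pareto_def)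
  have "measure M {w\<in>space M. xm < X w} \<le> measure M {w\<in>space M. 0 < X w}"
    using xm X by (intro finite_measure_mono) auto
  moreover have "measure M {w\<in>space M. 0 < X w} \<le> 1" by (rule prob_le_1)
  moreover have "measure M {w\<in>space M. xm < X w} = 1" using P xm by (auto simp: is_pareto_def)
  ultimately show ?thesis by linarith
qed

lemma part3:
  fixes m :: nat and \<alpha> \<omega> :: "nat \<Rightarrow> real" and Ms :: "nat \<Rightarrow> 'a measure" and Xs :: "nat \<Rightarrow> 'a \<Rightarrow> real"
    and M :: "'b measure" and X :: "'b \<Rightarrow> real" and Mbar :: "'c measure" and Xbar :: "'c \<Rightarrow> real"
  assumes q: "0 < q" "q < 1"
    and H1: "\<forall>i<m. \<alpha> i > 1 \<and> \<omega> i > 0" and H2: "(\<Sum>i<m. \<omega> i) = 1"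
    and H3: "\<forall>i<m. is_pareto (Ms i) (Xs i) (\<alpha> i) (xms i) \<and> (\<integral>w. Xs i w \<partial>(Ms i)) = 1"
    and H4: "is_pareto Mbar Xbar (\<Sum>i<m. \<omega> i * \<alpha> i) xmbar"
    and M: "prob_space M" and X: "X \<in> borel_measurable M"
    and mix: "\<forall>A \<in> sets borel. measure M (X -` A \<inter> space M) =
            (\<Sum>i<m. \<omega> i * measure (Ms i) (Xs i -` A \<inter> space (Ms i)))"
  shows "qcontrib M X q \<ge> (\<Sum>i<m. \<omega> i * qcontrib (Ms i) (Xs i) q) \<and>
          (\<Sum>i<m. \<omega> i * qcontrib (Ms i) (Xs i) q) \<ge> qcontrib Mbar Xbar q"
proof -
  interpret MP: prob_space M by fact
  have m0: "m \<noteq> 0" using H2 by (cases m) auto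
  have \<alpha>1: "\<And>i. i < m \<Longrightarrow> \<alpha> i > 1" and \<omega>0: "\<And>i. i < m \<Longrightarrow> \<omega> i > 0" using H1 by auto
  have P: "\<And>i. i < m \<Longrightarrow> is_pareto (Ms i) (Xs i) (\<alpha> i) (xms i)" using H3 by auto
  have E1: "\<And>i. i < m \<Longrightarrow> (\<integral>w. Xs i w \<partial>(Ms i)) = 1" using H3 by auto
  have psp: "\<And>i. i < m \<Longrightarrow> prob_space (Ms i)" using P by (auto simp: is_pareto_def)
  have Xsm: "\<And>i. i < m \<Longrightarrow> Xs i \<in> borel_measurable (Ms i)" using P by (auto simp: is_pareto_def)
  have xm0: "\<And>i. i < m \<Longrightarrow> xms i > 0" using P by (auto simp: is_pareto_def)
  have int: "integrable (Ms i) (Xs i)" if "i < m" for i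
    using E1[OF that] not_integrable_integral_eq by fastforce
  have kap: "qcontrib (Ms i) (Xs i) q = q powr ((\<alpha> i - 1) / \<alpha> i)" if "i < m" for i
    using pareto_qcontrib[OF P[OF that] \<alpha>1[OF that] q] .
  define abar where "abar = (\<Sum>i<m. \<omega> i * \<alpha> i)"
  have abar: "abar > 1"
  proof -
    have "(\<Sum>i<m. \<omega> i) < (\<Sum>i<m. \<omega> i * \<alpha> i)"
      using m0 \<alpha>1 \<omega>0 by (intro sum_strict_mono) auto
    then show ?thesis using H2 unfolding abar_def by simp
  qed
  have conv: "convex_on {1<..} (\<lambda>a. q powr ((a - 1) / a))"
  proof (rule convex_onI)
    fix t x y :: real assume t: "0 < t" "t < 1" and x: "x \<in> {1<..}" and y: "y \<in> {1<..}"
    show "q powr (((1 - t) *\<^sub>R x + t *\<^sub>R y - 1) / ((1 - t) *\<^sub>R x + t *\<^sub>R y))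
        \<le> (1 - t) * q powr ((x - 1) / x) + t * q powr ((y - 1) / y)"
    proof (cases "x = y")
      case True then show ?thesis by (simp add: algebra_simps)
    next
      case False
      then show ?thesis using kappa_strict_convex[OF q] t x y unfolding strict_convex_on_def
        by (auto intro: less_imp_le)
    qed
  qed (simp add: convex_real_interval)
  have B: "(\<Sum>i<m. \<omega> i * qcontrib (Ms i) (Xs i) q) \<ge> qcontrib Mbar Xbar q"
  proof -
    have "q powr ((abar - 1) / abar) \<le> (\<Sum>i<m. \<omega> i * q powr ((\<alpha> i - 1) / \<alpha> i))"
      using convex_on_sum[OF _ _ conv, of "{..<m}" \<omega> \<alpha>] m0 H2 \<omega>0 \<alpha>1
      unfolding abar_def by (auto simp: less_imp_le)
    then show ?thesis
      using pareto_qcontrib[OF H4 _ q] abar kap unfolding abar_def by simp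
  qed
  define S where "S = (\<lambda>t. measure M {w\<in>space M. t < X w})"
  define Si where "Si = (\<lambda>i t. measure (Ms i) {w\<in>space (Ms i). t < Xs i w})"
  have Ssum: "S t = (\<Sum>i<m. \<omega> i * Si i t)" for t
  proof -
    have mset: "{w\<in>space N. c < Y w} = Y -` {c<..} \<inter> space N" for N and Y :: "'d \<Rightarrow> real" and c
      by auto
    show ?thesis using mix unfolding S_def Si_def mset by auto
  qed
  define hi where "hi = (\<lambda>i. xms i * q powr (-1 / \<alpha> i))"
  have Sihi: "Si i (hi i) = q" if "i < m" for i
    using pareto_threshold(2)[OF P[OF that] \<alpha>1[OF that] q] unfolding Si_def hi_def .
  have thi: "exc_threshold (Ms i) (Xs i) q = hi i" if "i < m" for i
    using pareto_threshold(1)[OF P[OF that] \<alpha>1[OF that] q] unfolding hi_def .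
  have hi0: "hi i \<ge> 0" if "i < m" for i
    using xm0[OF that] unfolding hi_def by simp
  have Simono: "Si i t \<le> Si i s" if "i < m" "s \<le> t" for i s t
  proof -
    interpret prob_space "Ms i" using psp[OF that(1)] .
    show ?thesis unfolding Si_def using that Xsm[OF that(1)] by (intro finite_measure_mono) auto
  qed
  have kapi: "qcontrib (Ms i) (Xs i) q = (\<integral>w. Xs i w * indicator {hi i<..} (Xs i w) \<partial>Ms i)" if "i < m" for i
    unfolding qcontrib_def thi[OF that] E1[OF that] by simp
  have int0: "(\<integral>w. X w * indicator {0<..} (X w) \<partial>M) = (\<Sum>i<m. \<omega> i * (\<integral>w. Xs i w * indicator {0<..} (Xs i w) \<partial>Ms i))"
    by (rule mixture_int[OF M X _ psp int _ mix]) (use \<omega>0 in \<open>auto simp: less_imp_le\<close>)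
  have S0: "S 0 = 1"
    unfolding Ssum Si_def using pareto_tail0[OF P] H2 by simp
  have AEX: "AE w in M. 0 < X w"
    using MP.AE_prob_1[of "{w\<in>space M. 0 < X w}"] S0 unfolding S_def by auto
  have EX: "(\<integral>w. X w \<partial>M) = 1"
  proof -
    have "(\<integral>w. X w \<partial>M) = (\<integral>w. X w * indicator {0<..} (X w) \<partial>M)"
      by (rule integral_cong_AE) (use X AEX in \<open>auto simp: indicator_def\<close>)
    also have "\<dots> = (\<Sum>i<m. \<omega> i * (\<integral>w. Xs i w * indicator {0<..} (Xs i w) \<partial>Ms i))" by (rule int0)
    also have "\<dots> = (\<Sum>i<m. \<omega> i * 1)"
    proof (rule sum.cong[OF refl])
      fix i assume "i \<in> {..<m}" then have i: "i < m" by simp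
      have "(\<integral>w. Xs i w * indicator {0<..} (Xs i w) \<partial>Ms i) = (\<integral>w. Xs i w \<partial>Ms i)"
        by (rule integral_cong_AE) (use Xsm[OF i] pareto_AE[OF P[OF i]] xm0[OF i] in \<open>auto simp: indicator_def\<close>)
      then show "\<omega> i * (\<integral>w. Xs i w * indicator {0<..} (Xs i w) \<partial>Ms i) = \<omega> i * 1" using E1[OF i] by simp
    qed
    finally show ?thesis using H2 by simp
  qed
  define A where "A = {h. 0 \<le> h \<and> measure M {w \<in> space M. X w > h} \<le> q}"
  define h where "h = exc_threshold M X q"
  have hA: "h = Inf A" unfolding h_def A_def exc_threshold_def ..
  define t0 where "t0 = (\<Sum>i<m. hi i)"
  have t0A: "t0 \<in> A"
  proof -
    have "hi i \<le> t0" if "i < m" for i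
      unfolding t0_def using hi0 that by (intro member_le_sum) auto
    then have "Si i t0 \<le> q" if "i < m" for i using Simono[OF that] Sihi[OF that] that by force
    then have "S t0 \<le> (\<Sum>i<m. \<omega> i * q)" unfolding Ssum
      using \<omega>0 by (intro sum_mono mult_left_mono) (auto simp: less_imp_le)
    also have "\<dots> = q" using H2 by (simp add: sum_distrib_right[symmetric])
    finally show ?thesis unfolding A_def S_def t0_def using hi0 by (auto intro: sum_nonneg)
  qed
  have bdd: "bdd_below A" unfolding A_def by (rule bdd_belowI[of _ 0]) auto
  have h0: "0 \<le> h" unfolding hA using t0A by (intro cInf_greatest) (auto simp: A_def)
  have hle: "h \<le> t" if "t \<in> A" for t unfolding hA using bdd that by (rule cInf_lower[rotated])
  define F where "F = (\<lambda>t. \<Sum>i<m. \<omega> i * min 1 ((t / xms i) powr (- \<alpha> i)))"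
  have SF: "S t = F t" if "0 < t" for t
    unfolding Ssum F_def Si_def using pareto_tail_min[OF P _ that] \<alpha>1 by (intro sum.cong refl) force
  have Sh: "q \<le> S h"
  proof (rule ccontr)
    assume "\<not> q \<le> S h"
    then have Shq: "S h < q" by simp
    have hpos: "0 < h" using h0 Shq S0 q by (cases "h = 0") auto
    have "isCont F h" unfolding F_def using hpos
      by (intro continuous_intros) (auto dest!: xm0)
    then have "(F \<longlongrightarrow> F h) (at h)" by (simp add: isCont_def)
    moreover have "F h < q" using SF[OF hpos] Shq by simp
    ultimately have "eventually (\<lambda>t. F t < q) (at h)" by (rule order_tendstoD(2))
    then obtain d where d: "d > 0" and dd: "\<And>t. t \<noteq> h \<Longrightarrow> dist t h < d \<Longrightarrow> F t < q"
      unfolding eventually_at by blast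
    define t where "t = max (h / 2) (h - d / 2)"
    have t: "0 < t" "t < h" "dist t h < d" using hpos d unfolding t_def dist_real_def by auto
    have "S t < q" using dd[of t] t SF[OF t(1)] by simp
    then have "t \<in> A" using t unfolding A_def S_def by auto
    then show False using hle t by force
  qed
  have intA: "(\<integral>w. X w * indicator {h<..} (X w) \<partial>M) = (\<Sum>i<m. \<omega> i * (\<integral>w. Xs i w * indicator {h<..} (Xs i w) \<partial>Ms i))"
    by (rule mixture_int[OF M X _ psp int _ mix h0]) (use \<omega>0 in \<open>auto simp: less_imp_le\<close>)
  have ci: "qcontrib (Ms i) (Xs i) q \<le> (\<integral>w. Xs i w * indicator {h<..} (Xs i w) \<partial>Ms i) - h * Si i h + h * q"
    if "i < m" for i
    using comp_ineq[OF psp[OF that] int[OF that], of "hi i" q h] Sihi[OF that] kapi[OF that]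
    unfolding Si_def by simp
  have "(\<Sum>i<m. \<omega> i * qcontrib (Ms i) (Xs i) q) \<le>
        (\<Sum>i<m. \<omega> i * ((\<integral>w. Xs i w * indicator {h<..} (Xs i w) \<partial>Ms i) - h * Si i h + h * q))"
    using ci \<omega>0 by (intro sum_mono mult_left_mono) (auto simp: less_imp_le)
  also have "\<dots> = (\<Sum>i<m. \<omega> i * (\<integral>w. Xs i w * indicator {h<..} (Xs i w) \<partial>Ms i)) - h * (\<Sum>i<m. \<omega> i * Si i h) + h * q * (\<Sum>i<m. \<omega> i)"
    by (simp add: algebra_simps sum.distrib sum_subtractf sum_distrib_left)
  also have "\<dots> = (\<integral>w. X w * indicator {h<..} (X w) \<partial>M) - h * S h + h * q"
    using H2 by (simp add: intA Ssum)
  also have "\<dots> \<le> (\<integral>w. X w * indicator {h<..} (X w) \<partial>M)"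
    using h0 Sh by (simp add: mult_left_mono right_diff_distrib[symmetric] mult_nonneg_nonpos)
  also have "\<dots> = qcontrib M X q"
    unfolding qcontrib_def EX h_def by simp
  finally show ?thesis using B by simp
qed


theorem mainTheorem5:
  fixes q :: real
  assumes q: "0 < q" "q < 1"
  shows
    "(\<forall>(M :: 'a measure) X \<alpha> xm. \<alpha> > 1 \<and> is_pareto M X \<alpha> xm \<longrightarrow>
        qcontrib M X q = q powr ((\<alpha> - 1) / \<alpha>))
   \<and> (\<forall>(M :: real \<Rightarrow> 'a measure) X xm.
        (\<forall>\<alpha>>1. is_pareto (M \<alpha>) (X \<alpha>) \<alpha> (xm \<alpha>)) \<longrightarrow>
        strict_convex_on {1<..} (\<lambda>\<alpha>. qcontrib (M \<alpha>) (X \<alpha>) q))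
   \<and> (\<forall>(m :: nat) (\<alpha> :: nat \<Rightarrow> real) (\<omega> :: nat \<Rightarrow> real)
        (Ms :: nat \<Rightarrow> 'a measure) (Xs :: nat \<Rightarrow> 'a \<Rightarrow> real) xms
        (M :: 'b measure) (X :: 'b \<Rightarrow> real)
        (Mbar :: 'c measure) (Xbar :: 'c \<Rightarrow> real) xmbar.
        (\<forall>i<m. \<alpha> i > 1 \<and> \<omega> i > 0) \<and> (\<Sum>i<m. \<omega> i) = 1 \<and>
        (\<forall>i<m. is_pareto (Ms i) (Xs i) (\<alpha> i) (xms i) \<and> (\<integral>w. Xs i w \<partial>(Ms i)) = 1) \<and>
        is_pareto Mbar Xbar (\<Sum>i<m. \<omega> i * \<alpha> i) xmbar \<and>
        prob_space M \<and> X \<in> borel_measurable M \<and>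
        (\<forall>A \<in> sets borel. measure M (X -` A \<inter> space M) =
            (\<Sum>i<m. \<omega> i * measure (Ms i) (Xs i -` A \<inter> space (Ms i))))
      \<longrightarrow> qcontrib M X q \<ge> (\<Sum>i<m. \<omega> i * qcontrib (Ms i) (Xs i) q) \<and>
          (\<Sum>i<m. \<omega> i * qcontrib (Ms i) (Xs i) q) \<ge> qcontrib Mbar Xbar q)"
proof (intro conjI allI impI)
  fix M :: "'a measure" and X \<alpha> xm
  assume "1 < \<alpha> \<and> is_pareto M X \<alpha> xm"
  then show "qcontrib M X q = q powr ((\<alpha> - 1) / \<alpha>)"
    using pareto_qcontrib[OF _ _ q] by blast
next
  fix M :: "real \<Rightarrow> 'a measure" and X xm
  assume H: "\<forall>\<alpha>>1. is_pareto (M \<alpha>) (X \<alpha>) \<alpha> (xm \<alpha>)"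
  have e: "qcontrib (M a) (X a) q = q powr ((a - 1) / a)" if "a \<in> {1<..}" for a
    using pareto_qcontrib[OF _ _ q, of "M a" "X a" a "xm a"] H that by auto
  show "strict_convex_on {1<..} (\<lambda>\<alpha>. qcontrib (M \<alpha>) (X \<alpha>) q)"
    unfolding strict_convex_on_def
  proof (intro ballI allI impI)
    fix x y t :: real assume x: "x \<in> {1<..}" and y: "y \<in> {1<..}" and c: "x \<noteq> y \<and> 0 < t \<and> t < 1"
    have z: "(1 - t) * x + t * y \<in> {1<..}"
    proof -
      have "(1 - t) * 1 + t * 1 < (1 - t) * x + t * y"
        using x y c by (intro add_less_le_mono mult_strict_left_mono mult_left_mono) auto
      then show ?thesis by simp
    qed
    show "qcontrib (M ((1 - t) * x + t * y)) (X ((1 - t) * x + t * y)) q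
          < (1 - t) * qcontrib (M x) (X x) q + t * qcontrib (M y) (X y) q"
      unfolding e[OF x] e[OF y] e[OF z]
      using kappa_strict_convex[OF q] x y c unfolding strict_convex_on_def by blast
  qed
next
  fix m :: nat and \<alpha> \<omega> :: "nat \<Rightarrow> real" and Ms :: "nat \<Rightarrow> 'a measure" and Xs :: "nat \<Rightarrow> 'a \<Rightarrow> real"
    and xms and M :: "'b measure" and X :: "'b \<Rightarrow> real" and Mbar :: "'c measure" and Xbar :: "'c \<Rightarrow> real" and xmbar
  assume "(\<forall>i<m. \<alpha> i > 1 \<and> \<omega> i > 0) \<and> (\<Sum>i<m. \<omega> i) = 1 \<and>
        (\<forall>i<m. is_pareto (Ms i) (Xs i) (\<alpha> i) (xms i) \<and> (\<integral>w. Xs i w \<partial>(Ms i)) = 1) \<and>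
        is_pareto Mbar Xbar (\<Sum>i<m. \<omega> i * \<alpha> i) xmbar \<and>
        prob_space M \<and> X \<in> borel_measurable M \<and>
        (\<forall>A \<in> sets borel. measure M (X -` A \<inter> space M) =
            (\<Sum>i<m. \<omega> i * measure (Ms i) (Xs i -` A \<inter> space (Ms i))))"
  then show "qcontrib M X q \<ge> (\<Sum>i<m. \<omega> i * qcontrib (Ms i) (Xs i) q)"
    using part3[OF q, of m \<alpha> \<omega> Ms Xs xms Mbar Xbar xmbar M X] by blast
next
  fix m :: nat and \<alpha> \<omega> :: "nat \<Rightarrow> real" and Ms :: "nat \<Rightarrow> 'a measure" and Xs :: "nat \<Rightarrow> 'a \<Rightarrow> real"
    and xms and M :: "'b measure" and X :: "'b \<Rightarrow> real" and Mbar :: "'c measure" and Xbar :: "'c \<Rightarrow> real" and xmbar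
  assume "(\<forall>i<m. \<alpha> i > 1 \<and> \<omega> i > 0) \<and> (\<Sum>i<m. \<omega> i) = 1 \<and>
        (\<forall>i<m. is_pareto (Ms i) (Xs i) (\<alpha> i) (xms i) \<and> (\<integral>w. Xs i w \<partial>(Ms i)) = 1) \<and>
        is_pareto Mbar Xbar (\<Sum>i<m. \<omega> i * \<alpha> i) xmbar \<and>
        prob_space M \<and> X \<in> borel_measurable M \<and>
        (\<forall>A \<in> sets borel. measure M (X -` A \<inter> space M) =
            (\<Sum>i<m. \<omega> i * measure (Ms i) (Xs i -` A \<inter> space (Ms i))))"
  then show "(\<Sum>i<m. \<omega> i * qcontrib (Ms i) (Xs i) q) \<ge> qcontrib Mbar Xbar q"
    using part3[OF q, of m \<alpha> \<omega> Ms Xs xms Mbar Xbar xmbar M X] by blast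
qed

end
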